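(* Assume only upper-bound group constraints and $\mathcal S\neq\emptyset$, and let $F$ be a maxmin-fair distribution over $\mathcal S$ for satisfaction $A=V$. Then $$\min_{u\in\mathcal U}F[u]\ =\ \min_{\emptyset\neq X\subseteq\mathcal U}\frac{H(X)}{|X|},\qquad\text{where } H(X)=\max_{r\in\mathcal S}\sum_{u\in X}V(r,u).$$
   Context: Ranking setting: $\mathcal U=\{u_1,\dots,u_n\}$ finite set of individuals partitioned into groups $C_1,\dots,C_t$; rankings are bijections $r:\mathcal U\to[n]$. Only upper bounds: $\mathcal S=\{r:\ |\{u\in C_k: r(u)\le i\}|\le u_i^k\ \forall i\in[n],k\in[t]\}$ for given integers $u_i^k$. $V(r,u)=f(r(u))-g(u)$ with $f:[n]\to\mathbb R$ non-increasing and $g:\mathcal U\to\mathbb R$ arbitrary. For a distribution $D$ over $\mathcal S$, $D[u]=\mathbb E_{r\sim D}[V(r,u)]$. $F$ is maxmin-fair if for every distribution $D$ over $\mathcal S$ and every $u$: $D[u]>F[u]$ implies there exists $v$ with $D[v]<F[v]\le F[u]$. *)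

theory Defs
  imports "HOL-Probability.Probability"
begin

text \<open>Rankings of the finite set U: bijections U -> {1..card U}; fixed to 0 outside U
  so that the set of rankings is finite.\<close>
definition rankings :: "'a set \<Rightarrow> ('a \<Rightarrow> nat) set" where
  "rankings U = {r. bij_betw r U {1..card U} \<and> (\<forall>u. u \<notin> U \<longrightarrow> r u = 0)}"

definition feasible :: "'a set \<Rightarrow> nat \<Rightarrow> (nat \<Rightarrow> 'a set) \<Rightarrow> (nat \<Rightarrow> nat \<Rightarrow> int) \<Rightarrow> ('a \<Rightarrow> nat) set" where
  "feasible U t C ub = {r \<in> rankings U.
     \<forall>i\<in>{1..card U}. \<forall>k\<in>{1..t}. int (card {u \<in> C k. r u \<le> i}) \<le> ub i k}"

definition Val :: "(nat \<Rightarrow> real) \<Rightarrow> ('a \<Rightarrow> real) \<Rightarrow> ('a \<Rightarrow> nat) \<Rightarrow> 'a \<Rightarrow> real" where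
  "Val f g r u = f (r u) - g u"

definition expval :: "(nat \<Rightarrow> real) \<Rightarrow> ('a \<Rightarrow> real) \<Rightarrow> ('a \<Rightarrow> nat) pmf \<Rightarrow> 'a \<Rightarrow> real" where
  "expval f g D u = measure_pmf.expectation D (\<lambda>r. Val f g r u)"

definition maxmin_fair :: "'a set \<Rightarrow> ('a \<Rightarrow> nat) set \<Rightarrow> (nat \<Rightarrow> real) \<Rightarrow> ('a \<Rightarrow> real) \<Rightarrow> ('a \<Rightarrow> nat) pmf \<Rightarrow> bool" where
  "maxmin_fair U S f g F \<longleftrightarrow> set_pmf F \<subseteq> S \<and>
     (\<forall>D. set_pmf D \<subseteq> S \<longrightarrow> (\<forall>u\<in>U. expval f g D u > expval f g F u \<longrightarrow>
        (\<exists>v\<in>U. expval f g D v < expval f g F v \<and> expval f g F v \<le> expval f g F u)))"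

definition Hval :: "('a \<Rightarrow> nat) set \<Rightarrow> (nat \<Rightarrow> real) \<Rightarrow> ('a \<Rightarrow> real) \<Rightarrow> 'a set \<Rightarrow> real" where
  "Hval S f g X = Max ((\<lambda>r. \<Sum>u\<in>X. Val f g r u) ` S)"

end

theory Submission imports Defs begin

lemma rankings_finite: "finite U \<Longrightarrow> finite (rankings U)"
proof -
  assume fu: "finite U"
  have "rankings U \<subseteq> {r. \<forall>x. (x \<in> U \<longrightarrow> r x \<in> {1..card U}) \<and> (x \<notin> U \<longrightarrow> r x = 0)}"
    unfolding rankings_def by (auto dest: bij_betwE)
  thus ?thesis using finite_set_of_finite_funs[OF fu, of "{1..card U}" 0] finite_subset by blast
qed

lemma rank_range: "r \<in> rankings U \<Longrightarrow> u \<in> U \<Longrightarrow> r u \<in> {1..card U}"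
  unfolding rankings_def by (auto dest: bij_betwE)

lemma rank_inj: "r \<in> rankings U \<Longrightarrow> inj_on r U"
  unfolding rankings_def by (auto simp: bij_betw_def)

lemma rank_surj: "r \<in> rankings U \<Longrightarrow> i \<in> {1..card U} \<Longrightarrow> \<exists>u\<in>U. r u = i"
proof -
  assume a: "r \<in> rankings U" "i \<in> {1..card U}"
  hence "r ` U = {1..card U}" unfolding rankings_def bij_betw_def by auto
  with a(2) show ?thesis by (metis imageE)
qed

definition swp :: "('a \<Rightarrow> nat) \<Rightarrow> 'a \<Rightarrow> 'a \<Rightarrow> 'a \<Rightarrow> nat" where
  "swp r a b = (\<lambda>x. if x = a then r b else if x = b then r a else r x)"

lemma swp_rankings:
  assumes "r \<in> rankings U" "a \<in> U" "b \<in> U"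
  shows "swp r a b \<in> rankings U"
proof -
  have inj: "inj_on r U" using rank_inj[OF assms(1)] .
  have b: "bij_betw r U {1..card U}" and z: "\<forall>u. u \<notin> U \<longrightarrow> r u = 0"
    using assms(1) unfolding rankings_def by auto
  have "inj_on (swp r a b) U"
  proof (rule inj_onI)
    fix x y assume xy: "x \<in> U" "y \<in> U" "swp r a b x = swp r a b y"
    show "x = y"
      using xy assms(2,3) inj_onD[OF inj] unfolding swp_def
      by (cases "x = a"; cases "x = b"; cases "y = a"; cases "y = b") metis+
  qed
  moreover have "swp r a b ` U = r ` U"
  proof
    show "swp r a b ` U \<subseteq> r ` U" using assms(2,3) unfolding swp_def by auto
    show "r ` U \<subseteq> swp r a b ` U"
    proof
      fix y assume "y \<in> r ` U"
      then obtain x where x: "x \<in> U" "y = r x" by auto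
      show "y \<in> swp r a b ` U"
      proof (cases "x = a")
        case True thus ?thesis using x assms(3) unfolding swp_def by (intro image_eqI[of _ _ b]) auto
      next
        case False
        show ?thesis
        proof (cases "x = b")
          case True thus ?thesis using x assms(2) unfolding swp_def by (intro image_eqI[of _ _ a]) auto
        next
          case False thus ?thesis using x \<open>x \<noteq> a\<close> unfolding swp_def by (intro image_eqI[of _ _ x]) auto
        qed
      qed
    qed
  qed
  ultimately have "bij_betw (swp r a b) U {1..card U}"
    using b by (simp add: bij_betw_def)
  moreover have "\<forall>u. u \<notin> U \<longrightarrow> swp r a b u = 0" using z assms(2,3) unfolding swp_def by auto
  ultimately show ?thesis unfolding rankings_def by auto
qed

lemma abel:
  fixes f :: "nat \<Rightarrow> real"
  assumes "finite Y" "\<forall>u\<in>Y. a u \<in> {1..n}"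
  shows "(\<Sum>u\<in>Y. f (a u)) = real (card Y) * f n + (\<Sum>i\<in>{1..<n}. (f i - f (Suc i)) * real (card {u\<in>Y. a u \<le> i}))"
proof -
  have 1: "f (a u) = f n + (\<Sum>i\<in>{1..<n}. if a u \<le> i then f i - f (Suc i) else 0)" if "u \<in> Y" for u
  proof -
    have le: "a u \<le> n" "1 \<le> a u" using assms(2) that by auto
    have "(\<Sum>i\<in>{1..<n}. if a u \<le> i then f i - f (Suc i) else 0) = (\<Sum>i\<in>{a u..<n}. f i - f (Suc i))"
      using le by (intro sum.mono_neutral_cong_right) auto
    also have "\<dots> = - (\<Sum>i\<in>{a u..<n}. f (Suc i) - f i)" by (simp add: sum_negf[symmetric])
    also have "\<dots> = f (a u) - f n" using sum_Suc_diff'[OF le(1), of f] by simp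
    finally show ?thesis by simp
  qed
  have "(\<Sum>u\<in>Y. f (a u)) = (\<Sum>u\<in>Y. f n + (\<Sum>i\<in>{1..<n}. if a u \<le> i then f i - f (Suc i) else 0))"
    using 1 by (rule sum.cong[OF refl])
  also have "\<dots> = real (card Y) * f n + (\<Sum>i\<in>{1..<n}. \<Sum>u\<in>Y. if a u \<le> i then f i - f (Suc i) else 0)"
    by (simp add: sum.distrib sum.swap[of _ Y])
  also have "(\<Sum>i\<in>{1..<n}. \<Sum>u\<in>Y. if a u \<le> i then f i - f (Suc i) else 0) = (\<Sum>i\<in>{1..<n}. (f i - f (Suc i)) * real (card {u\<in>Y. a u \<le> i}))"
    using assms(1) by (intro sum.cong refl) (simp add: sum.If_cases Int_def)
  finally show ?thesis .
qed


lemma swp_card: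
  assumes "a \<in> A \<longleftrightarrow> b \<in> A"
  shows "card {u\<in>A. swp r a b u \<le> j} = card {u\<in>A. r u \<le> j}"
proof -
  define \<tau> where "\<tau> = (\<lambda>x. if x = a then b else if x = b then a else x)"
  have tt: "\<tau> (\<tau> x) = x" for x unfolding \<tau>_def by auto
  have st: "swp r a b (\<tau> x) = r x" for x unfolding \<tau>_def swp_def by auto
  have tA: "\<tau> x \<in> A \<longleftrightarrow> x \<in> A" for x using assms unfolding \<tau>_def by auto
  have inj: "inj_on \<tau> X" for X by (metis inj_onI tt)
  have "\<tau> ` {u\<in>A. r u \<le> j} = {u\<in>A. swp r a b u \<le> j}"
  proof
    show "\<tau> ` {u\<in>A. r u \<le> j} \<subseteq> {u\<in>A. swp r a b u \<le> j}"
      using st tA by auto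
    show "{u\<in>A. swp r a b u \<le> j} \<subseteq> \<tau> ` {u\<in>A. r u \<le> j}"
    proof
      fix y assume y: "y \<in> {u\<in>A. swp r a b u \<le> j}"
      have "\<tau> y \<in> {u\<in>A. r u \<le> j}" using y st[of "\<tau> y"] tt[of y] tA[of y] by auto
      thus "y \<in> \<tau> ` {u\<in>A. r u \<le> j}" using tt[of y] by (metis imageI)
    qed
  qed
  thus ?thesis using card_image[OF inj] by metis
qed

lemma sum_less_one:
  fixes r1 r0 :: "'a \<Rightarrow> nat"
  assumes "finite Y" "u \<in> Y" "\<forall>x\<in>Y-{u}. r1 x = r0 x" "r1 u < r0 u"
  shows "sum r1 Y < sum r0 Y"
proof -
  have "sum r1 Y = r1 u + sum r1 (Y - {u})" using assms(1,2) by (simp add: sum.remove)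
  also have "sum r1 (Y - {u}) = sum r0 (Y - {u})" using assms(3) by (intro sum.cong) auto
  also have "r1 u + sum r0 (Y - {u}) < r0 u + sum r0 (Y - {u})" using assms(4) by simp
  also have "r0 u + sum r0 (Y - {u}) = sum r0 Y" using assms(1,2) by (simp add: sum.remove)
  finally show ?thesis .
qed

context
  fixes U :: "'a set" and t :: nat and C :: "nat \<Rightarrow> 'a set" and ub :: "nat \<Rightarrow> nat \<Rightarrow> int"
  assumes finU: "finite U"
    and gsub: "\<forall>k\<in>{1..t}. C k \<subseteq> U"
    and gcov: "(\<Union>k\<in>{1..t}. C k) = U"
    and gdisj: "\<forall>k\<in>{1..t}. \<forall>l\<in>{1..t}. k \<noteq> l \<longrightarrow> C k \<inter> C l = {}"
begin

lemma feas_swap_same: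
  assumes r: "r \<in> feasible U t C ub" and k: "k \<in> {1..t}" and ab: "a \<in> C k" "b \<in> C k"
  shows "swp r a b \<in> feasible U t C ub"
proof -
  have rr: "r \<in> rankings U" using r unfolding feasible_def by auto
  have aU: "a \<in> U" "b \<in> U" using gsub k ab by auto
  have "a \<in> C k' \<longleftrightarrow> b \<in> C k'" if "k' \<in> {1..t}" for k'
  proof (cases "k' = k")
    case False
    hence "C k \<inter> C k' = {}" using gdisj k that by auto
    thus ?thesis using ab by auto
  qed (use ab in auto)
  hence "card {u\<in>C k'. swp r a b u \<le> j} = card {u\<in>C k'. r u \<le> j}" if "k' \<in> {1..t}" for k' j
    using that by (intro swp_card) auto
  thus ?thesis using r swp_rankings[OF rr aU] unfolding feasible_def by auto
qed

lemma feas_swap_up: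
  assumes r: "r \<in> feasible U t C ub" and k: "k \<in> {1..t}"
    and vu: "v \<in> U" "u \<in> C k" "r v < r u"
    and qmin: "\<forall>x\<in>C k. r v < r x \<longrightarrow> r u \<le> r x"
    and bnd: "\<forall>j. r v \<le> j \<and> j \<le> card U \<longrightarrow> int (card {x\<in>C k. r x \<le> r v}) + 1 \<le> ub j k"
  shows "swp r v u \<in> feasible U t C ub"
proof -
  have rr: "r \<in> rankings U" using r unfolding feasible_def by auto
  have uU: "u \<in> U" using gsub k vu by auto
  have "int (card {x\<in>C k'. swp r v u x \<le> j}) \<le> ub j k'" if j: "j \<in> {1..card U}" and k': "k' \<in> {1..t}" for j k'
  proof -
    have old: "int (card {x\<in>C k'. r x \<le> j}) \<le> ub j k'" using r j k' unfolding feasible_def by auto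
    have fin: "finite (C k')" using gsub k' finU finite_subset by blast
    show ?thesis
    proof (cases "j < r v \<or> r u \<le> j")
      case True
      have "swp r v u x \<le> j \<longleftrightarrow> r x \<le> j" for x
        using True vu(3) unfolding swp_def by auto
      hence "{x\<in>C k'. swp r v u x \<le> j} = {x\<in>C k'. r x \<le> j}" by blast
      thus ?thesis using old by simp
    next
      case False
      hence "swp r v u x \<le> j \<Longrightarrow> x = u \<or> r x \<le> j" for x
        unfolding swp_def by (auto split: if_splits)
      hence sub: "{x\<in>C k'. swp r v u x \<le> j} \<subseteq> insert u {x\<in>C k'. r x \<le> j} \<inter> C k'"
        by blast
      show ?thesis
      proof (cases "k' = k")
        case True
        have "{x\<in>C k'. swp r v u x \<le> j} \<subseteq> insert u {x\<in>C k. r x \<le> r v}"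
        proof
          fix x assume x: "x \<in> {x\<in>C k'. swp r v u x \<le> j}"
          show "x \<in> insert u {x\<in>C k. r x \<le> r v}"
          proof (cases "x = u")
            case False
            hence "x \<in> C k" "r x \<le> j" using x sub True by auto
            moreover have "r v < r x \<longrightarrow> r u \<le> r x" using qmin \<open>x \<in> C k\<close> by blast
            ultimately have "r x \<le> r v" using \<open>\<not> (j < r v \<or> r u \<le> j)\<close> by linarith
            thus ?thesis using \<open>x \<in> C k\<close> by blast
          qed simp
        qed
        hence "card {x\<in>C k'. swp r v u x \<le> j} \<le> card (insert u {x\<in>C k. r x \<le> r v})"
          using True fin by (intro card_mono) auto
        also have "\<dots> \<le> card {x\<in>C k. r x \<le> r v} + 1"
        proof -
          have "finite {x\<in>C k. r x \<le> r v}" using fin True by auto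
          thus ?thesis by (simp add: card_insert_if)
        qed
        finally have c: "int (card {x\<in>C k'. swp r v u x \<le> j}) \<le> int (card {x\<in>C k. r x \<le> r v}) + 1"
          by linarith
        have b: "int (card {x\<in>C k. r x \<le> r v}) + 1 \<le> ub j k" using bnd False j by auto
        show ?thesis using c b True by simp
      next
        case False
        have "u \<notin> C k'" using gdisj k k' False vu(2) by blast
        hence "{x\<in>C k'. swp r v u x \<le> j} \<subseteq> {x\<in>C k'. r x \<le> j}" using sub by auto
        hence "card {x\<in>C k'. swp r v u x \<le> j} \<le> card {x\<in>C k'. r x \<le> j}"
          using fin by (intro card_mono) auto
        thus ?thesis using old by linarith
      qed
    qed
  qed
  thus ?thesis using swp_rankings[OF rr vu(1) uU] unfolding feasible_def by auto
qed


lemma cnt_split: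
  assumes "Y \<subseteq> U"
  shows "card {u\<in>Y. h u \<le> i} = (\<Sum>k\<in>{1..t}. card {u\<in>C k. u \<in> Y \<and> h u \<le> i})"
proof -
  have "{u\<in>Y. h u \<le> i} = (\<Union>k\<in>{1..t}. {u\<in>C k. u \<in> Y \<and> h u \<le> i})"
    using assms gcov by auto
  moreover have "card (\<Union>k\<in>{1..t}. {u\<in>C k. u \<in> Y \<and> h u \<le> i}) = (\<Sum>k\<in>{1..t}. card {u\<in>C k. u \<in> Y \<and> h u \<le> i})"
  proof (rule card_UN_disjoint)
    show "\<forall>k\<in>{1..t}. finite {u\<in>C k. u \<in> Y \<and> h u \<le> i}"
    proof
      fix k assume "k \<in> {1..t}"
      hence "{u\<in>C k. u \<in> Y \<and> h u \<le> i} \<subseteq> U" using gsub by blast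
      thus "finite {u\<in>C k. u \<in> Y \<and> h u \<le> i}" using finU by (rule finite_subset)
    qed
    show "\<forall>k\<in>{1..t}. \<forall>l\<in>{1..t}. k \<noteq> l \<longrightarrow> {u\<in>C k. u \<in> Y \<and> h u \<le> i} \<inter> {u\<in>C l. u \<in> Y \<and> h u \<le> i} = {}"
      using gdisj by blast
  qed simp
  ultimately show ?thesis by simp
qed

lemma opt_exists:
  assumes r: "r \<in> feasible U t C ub" and Y: "Y \<subseteq> U"
  shows "\<exists>r0\<in>feasible U t C ub. (\<forall>u\<in>Y. r0 u \<le> r u) \<and>
           (\<forall>s\<in>feasible U t C ub. \<forall>i. card {u\<in>Y. s u \<le> i} \<le> card {u\<in>Y. r0 u \<le> i})"
proof -
  let ?S = "feasible U t C ub"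
  let ?T = "{r'\<in>?S. \<forall>u\<in>Y. r' u \<le> r u}"
  have finY: "finite Y" using Y finU finite_subset by blast
  have "r \<in> ?T" using r by auto
  then obtain r0 where r0T: "r0 \<in> ?T" and r0min: "\<forall>r'. r' \<in> ?T \<longrightarrow> sum r0 Y \<le> sum r' Y"
    using ex_has_least_nat[of "\<lambda>r'. r' \<in> ?T" r "\<lambda>r'. sum r' Y"] by blast
  have r0S: "r0 \<in> ?S" and r0le: "\<forall>u\<in>Y. r0 u \<le> r u" using r0T by auto
  have r0R: "r0 \<in> rankings U" using r0S unfolding feasible_def by auto
  have noinv: "\<not> r0 w < r0 u'" if k: "k \<in> {1..t}" and w: "w \<in> C k" "w \<notin> Y" and u': "u' \<in> C k" "u' \<in> Y" for k w u'
  proof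
    assume lt: "r0 w < r0 u'"
    let ?r1 = "swp r0 w u'"
    have "?r1 \<in> ?S" using feas_swap_same[OF r0S k w(1) u'(1)] .
    moreover have "\<forall>x\<in>Y. ?r1 x \<le> r x"
    proof
      fix x assume x: "x \<in> Y"
      show "?r1 x \<le> r x"
      proof (cases "x = u'")
        case True
        have "x \<noteq> w" using x w(2) by auto
        hence "?r1 x = r0 w" using True unfolding swp_def by simp
        moreover have "r0 u' \<le> r u'" using r0le u'(2) by blast
        ultimately show ?thesis using lt True by simp
      next
        case False thus ?thesis using r0le x w(2) unfolding swp_def by auto
      qed
    qed
    ultimately have "?r1 \<in> ?T" by blast
    hence "sum r0 Y \<le> sum ?r1 Y" using r0min by blast
    moreover have "sum ?r1 Y < sum r0 Y"
      by (rule sum_less_one[OF finY u'(2)]) (use w(2) lt in \<open>auto simp: swp_def\<close>)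
    ultimately show False by linarith
  qed
  have "\<forall>s\<in>?S. \<forall>i. card {u\<in>Y. s u \<le> i} \<le> card {u\<in>Y. r0 u \<le> i}"
  proof (rule ccontr)
    assume "\<not> ?thesis"
    hence "\<exists>i. \<exists>s\<in>?S. card {u\<in>Y. r0 u \<le> i} < card {u\<in>Y. s u \<le> i}" by (auto simp: not_le)
    then obtain i where iP: "\<exists>s\<in>?S. card {u\<in>Y. r0 u \<le> i} < card {u\<in>Y. s u \<le> i}"
      and imin: "\<forall>i'<i. \<not> (\<exists>s\<in>?S. card {u\<in>Y. r0 u \<le> i'} < card {u\<in>Y. s u \<le> i'})"
      using exists_least_iff[of "\<lambda>i. \<exists>s\<in>?S. card {u\<in>Y. r0 u \<le> i} < card {u\<in>Y. s u \<le> i}"] by blast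
    then obtain s where sS: "s \<in> ?S" and slt: "card {u\<in>Y. r0 u \<le> i} < card {u\<in>Y. s u \<le> i}" by blast
    have sR: "s \<in> rankings U" using sS unfolding feasible_def by auto
    have i0: "i \<noteq> 0"
    proof
      assume "i = 0"
      hence "{u\<in>Y. s u \<le> i} = {}" using rank_range[OF sR] Y by fastforce
      hence "card {u\<in>Y. s u \<le> i} = 0" by (simp only: card.empty)
      thus False using slt by linarith
    qed
    have in_: "i \<le> card U"
    proof (rule ccontr)
      assume "\<not> i \<le> card U"
      hence "{u\<in>Y. r0 u \<le> i} = Y" using rank_range[OF r0R] Y by fastforce
      moreover have "card {u\<in>Y. s u \<le> i} \<le> card Y" using finY by (intro card_mono) auto
      ultimately show False using slt by simp
    qed
    obtain v where vU: "v \<in> U" and rv: "r0 v = i" using rank_surj[OF r0R, of i] i0 in_ by auto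
    have vY: "v \<notin> Y"
    proof
      assume vY: "v \<in> Y"
      have e1: "{u\<in>Y. r0 u \<le> i} = insert v {u\<in>Y. r0 u \<le> i - 1}"
      proof -
        have neq: "r0 x \<noteq> r0 v" if "x \<in> Y" "x \<noteq> v" for x
          using inj_onD[OF rank_inj[OF r0R], of x v] that Y vU by auto
        have "x \<in> Y \<Longrightarrow> (r0 x \<le> i \<longleftrightarrow> x = v \<or> r0 x \<le> i - 1)" for x
          using neq[of x] rv i0 by (cases "x = v") auto
        thus ?thesis using vY by blast
      qed
      have "v \<notin> {u\<in>Y. r0 u \<le> i - 1}" using rv i0 by auto
      hence c1: "card {u\<in>Y. r0 u \<le> i} = card {u\<in>Y. r0 u \<le> i - 1} + 1"
        using e1 finY by simp
      obtain w where "w \<in> U" "s w = i" using rank_surj[OF sR, of i] i0 in_ by auto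
      have "{u\<in>Y. s u \<le> i} \<subseteq> insert w {u\<in>Y. s u \<le> i - 1}"
      proof
        fix x assume x: "x \<in> {u\<in>Y. s u \<le> i}"
        show "x \<in> insert w {u\<in>Y. s u \<le> i - 1}"
        proof (cases "s x = i")
          case True
          hence "x = w" using inj_onD[OF rank_inj[OF sR], of x w] x Y \<open>w \<in> U\<close> \<open>s w = i\<close> by auto
          thus ?thesis by simp
        next
          case False thus ?thesis using x by auto
        qed
      qed
      hence "card {u\<in>Y. s u \<le> i} \<le> card (insert w {u\<in>Y. s u \<le> i - 1})"
        using finY by (intro card_mono) auto
      also have "\<dots> \<le> card {u\<in>Y. s u \<le> i - 1} + 1"
        using finY by (simp add: card_insert_if)
      also have "card {u\<in>Y. s u \<le> i - 1} \<le> card {u\<in>Y. r0 u \<le> i - 1}"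
      proof -
        have "i - 1 < i" using i0 by simp
        hence "\<not> card {u\<in>Y. r0 u \<le> i - 1} < card {u\<in>Y. s u \<le> i - 1}" using imin sS by blast
        thus ?thesis by simp
      qed
      finally show False using c1 slt by linarith
    qed
    have "(\<Sum>k\<in>{1..t}. card {u\<in>C k. u \<in> Y \<and> r0 u \<le> i}) < (\<Sum>k\<in>{1..t}. card {u\<in>C k. u \<in> Y \<and> s u \<le> i})"
      using slt cnt_split[OF Y, of r0 i] cnt_split[OF Y, of s i] by linarith
    then obtain k where k: "k \<in> {1..t}"
      and klt: "card {u\<in>C k. u \<in> Y \<and> r0 u \<le> i} < card {u\<in>C k. u \<in> Y \<and> s u \<le> i}"
    proof -
      assume hyp: "\<And>k. k \<in> {1..t} \<Longrightarrow> card {u\<in>C k. u \<in> Y \<and> r0 u \<le> i} < card {u\<in>C k. u \<in> Y \<and> s u \<le> i} \<Longrightarrow> thesis"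
      show thesis
      proof (rule ccontr)
        assume "\<not> thesis"
        hence "\<forall>k\<in>{1..t}. card {u\<in>C k. u \<in> Y \<and> s u \<le> i} \<le> card {u\<in>C k. u \<in> Y \<and> r0 u \<le> i}"
          using hyp not_less by blast
        hence "(\<Sum>k\<in>{1..t}. card {u\<in>C k. u \<in> Y \<and> s u \<le> i}) \<le> (\<Sum>k\<in>{1..t}. card {u\<in>C k. u \<in> Y \<and> r0 u \<le> i})"
          by (intro sum_mono) auto
        thus False using \<open>(\<Sum>k\<in>{1..t}. _) < _\<close> by linarith
      qed
    qed
    have finCk: "finite (C k)" using gsub k finU finite_subset by blast
    have CkU: "C k \<subseteq> U" using gsub k by blast
    obtain u0 where u0: "u0 \<in> C k" "u0 \<in> Y" "i < r0 u0"
    proof (rule ccontr)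
      assume "\<not> thesis"
      have "\<forall>x\<in>C k. x \<in> Y \<longrightarrow> r0 x \<le> i"
      proof (intro ballI impI)
        fix x assume x: "x \<in> C k" "x \<in> Y"
        show "r0 x \<le> i"
        proof (rule ccontr)
          assume "\<not> r0 x \<le> i"
          hence "i < r0 x" by simp
          thus False using that[OF x] \<open>\<not> thesis\<close> by blast
        qed
      qed
      hence "{u\<in>C k. u \<in> Y \<and> s u \<le> i} \<subseteq> {u\<in>C k. u \<in> Y \<and> r0 u \<le> i}" by auto
      hence "card {u\<in>C k. u \<in> Y \<and> s u \<le> i} \<le> card {u\<in>C k. u \<in> Y \<and> r0 u \<le> i}"
        using finCk by (intro card_mono) auto
      thus False using klt by simp
    qed
    obtain u where uP: "u \<in> C k \<and> i < r0 u" and umin: "\<forall>x. x \<in> C k \<and> i < r0 x \<longrightarrow> r0 u \<le> r0 x"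
      using ex_has_least_nat[of "\<lambda>x. x \<in> C k \<and> i < r0 x" u0 r0] u0 by blast
    have uY: "u \<in> Y"
    proof (rule ccontr)
      assume nY: "u \<notin> Y"
      have "u \<noteq> u0" using nY u0 by auto
      hence "r0 u \<noteq> r0 u0" using inj_onD[OF rank_inj[OF r0R]] uP u0 CkU by blast
      hence "r0 u < r0 u0" using umin u0 by force
      thus False using noinv[OF k _ nY u0(1,2)] uP by blast
    qed
    have topY: "{x\<in>C k. r0 x \<le> i} = {x\<in>C k. x \<in> Y \<and> r0 x \<le> i}"
    proof -
      have "x \<in> Y" if "x \<in> C k" "r0 x \<le> i" for x
        using noinv[OF k that(1) _ u0(1,2)] that u0(3) by force
      thus ?thesis by blast
    qed
    have bnd: "\<forall>j. r0 v \<le> j \<and> j \<le> card U \<longrightarrow> int (card {x\<in>C k. r0 x \<le> r0 v}) + 1 \<le> ub j k"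
    proof (intro allI impI)
      fix j assume j: "r0 v \<le> j \<and> j \<le> card U"
      have "card {x\<in>C k. r0 x \<le> r0 v} + 1 \<le> card {u\<in>C k. u \<in> Y \<and> s u \<le> i}"
        using klt topY rv by simp
      also have "\<dots> \<le> card {x\<in>C k. s x \<le> j}"
        using finCk j rv by (intro card_mono) auto
      finally have "int (card {x\<in>C k. r0 x \<le> r0 v}) + 1 \<le> int (card {x\<in>C k. s x \<le> j})" by linarith
      also have "\<dots> \<le> ub j k" using sS j k i0 rv unfolding feasible_def by auto
      finally show "int (card {x\<in>C k. r0 x \<le> r0 v}) + 1 \<le> ub j k" .
    qed
    have r1S: "swp r0 v u \<in> ?S"
      using feas_swap_up[OF r0S k vU conjunct1[OF uP]] uP rv umin bnd by auto
    have "\<forall>x\<in>Y. swp r0 v u x \<le> r x"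
    proof
      fix x assume x: "x \<in> Y"
      show "swp r0 v u x \<le> r x"
      proof (cases "x = u")
        case True
        have "x \<noteq> v" using x vY by auto
        hence "swp r0 v u x = r0 v" using True unfolding swp_def by simp
        moreover have "r0 u \<le> r u" using r0le uY by blast
        ultimately show ?thesis using uP rv True by simp
      next
        case False thus ?thesis using r0le x vY unfolding swp_def by auto
      qed
    qed
    hence "swp r0 v u \<in> ?T" using r1S by blast
    hence "sum r0 Y \<le> sum (swp r0 v u) Y" using r0min by blast
    moreover have "sum (swp r0 v u) Y < sum r0 Y"
      by (rule sum_less_one[OF finY uY]) (use vY uP rv in \<open>auto simp: swp_def\<close>)
    ultimately show False by linarith
  qed
  thus ?thesis using r0S r0le by blast
qed


lemma opt_f:
  fixes f :: "nat \<Rightarrow> real"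
  assumes fm: "\<forall>i j. 1 \<le> i \<and> i \<le> j \<and> j \<le> card U \<longrightarrow> f j \<le> f i"
    and r: "r \<in> feasible U t C ub" and Y: "Y \<subseteq> U"
  shows "\<exists>r0. r0 \<in> feasible U t C ub \<and> (\<forall>u\<in>Y. r0 u \<le> r u) \<and>
           (\<forall>s\<in>feasible U t C ub. (\<Sum>u\<in>Y. f (s u)) \<le> (\<Sum>u\<in>Y. f (r0 u)))"
proof -
  obtain r0 where r0S: "r0 \<in> feasible U t C ub" and r0le: "\<forall>u\<in>Y. r0 u \<le> r u"
    and cnt: "\<forall>s\<in>feasible U t C ub. \<forall>i. card {u\<in>Y. s u \<le> i} \<le> card {u\<in>Y. r0 u \<le> i}"
    using opt_exists[OF r Y] by blast
  have finY: "finite Y" using Y finU finite_subset by blast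
  have "(\<Sum>u\<in>Y. f (s u)) \<le> (\<Sum>u\<in>Y. f (r0 u))" if sS: "s \<in> feasible U t C ub" for s
  proof -
    have sR: "s \<in> rankings U" using sS unfolding feasible_def by auto
    have r0R: "r0 \<in> rankings U" using r0S unfolding feasible_def by auto
    have rs: "\<forall>u\<in>Y. s u \<in> {1..card U}" using rank_range[OF sR] Y by blast
    have rr: "\<forall>u\<in>Y. r0 u \<in> {1..card U}" using rank_range[OF r0R] Y by blast
    have "(\<Sum>i\<in>{1..<card U}. (f i - f (Suc i)) * real (card {u\<in>Y. s u \<le> i}))
        \<le> (\<Sum>i\<in>{1..<card U}. (f i - f (Suc i)) * real (card {u\<in>Y. r0 u \<le> i}))"
    proof (rule sum_mono)
      fix i assume i: "i \<in> {1..<card U}"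
      have "f (Suc i) \<le> f i" using fm i by auto
      moreover have "real (card {u\<in>Y. s u \<le> i}) \<le> real (card {u\<in>Y. r0 u \<le> i})" using cnt sS by auto
      ultimately show "(f i - f (Suc i)) * real (card {u\<in>Y. s u \<le> i}) \<le> (f i - f (Suc i)) * real (card {u\<in>Y. r0 u \<le> i})"
        by (intro mult_left_mono) auto
    qed
    thus ?thesis using abel[OF finY rs, of f] abel[OF finY rr, of f] by linarith
  qed
  thus ?thesis using r0S r0le by blast
qed

end

theorem mainTheorem12:
  fixes U :: "'a set" and t :: nat and C :: "nat \<Rightarrow> 'a set"
    and ub :: "nat \<Rightarrow> nat \<Rightarrow> int" and f :: "nat \<Rightarrow> real" and g :: "'a \<Rightarrow> real"
    and F :: "('a \<Rightarrow> nat) pmf"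
  assumes finU: "finite U"
    and groups_sub: "\<forall>k\<in>{1..t}. C k \<subseteq> U"
    and groups_cover: "(\<Union>k\<in>{1..t}. C k) = U"
    and groups_disj: "\<forall>k\<in>{1..t}. \<forall>l\<in>{1..t}. k \<noteq> l \<longrightarrow> C k \<inter> C l = {}"
    and f_mono: "\<forall>i j. 1 \<le> i \<and> i \<le> j \<and> j \<le> card U \<longrightarrow> f j \<le> f i"
    and S_ne: "feasible U t C ub \<noteq> {}"
    and fair: "maxmin_fair U (feasible U t C ub) f g F"
  shows "Min ((\<lambda>u. expval f g F u) ` U)
       = Min ((\<lambda>X. Hval (feasible U t C ub) f g X / real (card X)) ` {X. X \<subseteq> U \<and> X \<noteq> {}})"
proof -
  let ?S = "feasible U t C ub"
  let ?E = "\<lambda>u. expval f g F u"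
  have finS: "finite ?S"
    using rankings_finite[OF finU] unfolding feasible_def by auto
  have suppF: "set_pmf F \<subseteq> ?S" using fair unfolding maxmin_fair_def by blast
  have expS: "expval f g D u = (\<Sum>r\<in>?S. Val f g r u * pmf D r)" if "set_pmf D \<subseteq> ?S" for D u
    unfolding expval_def using that by (intro integral_measure_pmf_real[OF finS]) auto
  have Hge: "(\<Sum>u\<in>X. Val f g r u) \<le> Hval ?S f g X" if "r \<in> ?S" for X r
    unfolding Hval_def using finS that by (intro Max_ge) auto
  have Hin: "\<exists>r\<in>?S. Hval ?S f g X = (\<Sum>u\<in>X. Val f g r u)" for X
  proof -
    have "Hval ?S f g X \<in> (\<lambda>r. \<Sum>u\<in>X. Val f g r u) ` ?S"
      unfolding Hval_def using finS S_ne by (intro Max_in) auto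
    thus ?thesis by auto
  qed
  have pmf1: "(\<Sum>r\<in>?S. pmf F r) = 1" using sum_pmf_eq_1[OF finS suppF] .
  show ?thesis
  proof (cases "U = {}")
    case True
    thus ?thesis by simp
  next
    case False
    let ?m = "Min (?E ` U)"
    let ?R = "(\<lambda>X. Hval ?S f g X / real (card X)) ` {X. X \<subseteq> U \<and> X \<noteq> {}}"
    have finR: "finite ?R" using finU by simp
    have Rne: "?R \<noteq> {}" using False by auto
    have mle: "?m \<le> ?E u" if "u \<in> U" for u using finU that by simp
    have part1: "?m \<le> Min ?R"
    proof (rule Min.boundedI[OF finR Rne])
      fix y assume "y \<in> ?R"
      then obtain X where X: "X \<subseteq> U" "X \<noteq> {}" and y: "y = Hval ?S f g X / real (card X)" by auto
      have finX: "finite X" using X finU finite_subset by blast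
      have cX: "real (card X) > 0" using X finX by (simp add: card_gt_0_iff)
      have "real (card X) * ?m = (\<Sum>u\<in>X. ?m)" by simp
      also have "\<dots> \<le> (\<Sum>u\<in>X. ?E u)" using X mle by (intro sum_mono) auto
      also have "\<dots> = (\<Sum>u\<in>X. \<Sum>r\<in>?S. Val f g r u * pmf F r)" using expS[OF suppF] by simp
      also have "\<dots> = (\<Sum>r\<in>?S. pmf F r * (\<Sum>u\<in>X. Val f g r u))"
        by (subst sum.swap) (simp add: sum_distrib_left mult.commute)
      also have "\<dots> \<le> (\<Sum>r\<in>?S. pmf F r * Hval ?S f g X)"
        using Hge by (intro sum_mono mult_left_mono) auto
      also have "\<dots> = Hval ?S f g X" using pmf1 by (simp add: sum_distrib_right[symmetric])
      finally have "real (card X) * ?m \<le> Hval ?S f g X" .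
      thus "?m \<le> y" unfolding y using cX by (simp add: pos_le_divide_eq mult.commute)
    qed
    define L where "L = {u\<in>U. ?E u = ?m}"
    have LU: "L \<subseteq> U" unfolding L_def by auto
    have Lne: "L \<noteq> {}"
    proof -
      have "?m \<in> ?E ` U" using finU False by (intro Min_in) auto
      thus ?thesis unfolding L_def by auto
    qed
    have finL: "finite L" using LU finU finite_subset by blast
    have HL: "Hval ?S f g L \<le> real (card L) * ?m"
    proof (rule ccontr)
      assume "\<not> ?thesis"
      hence Hgt: "real (card L) * ?m < Hval ?S f g L" by simp
      have "\<forall>r\<in>?S. \<exists>r0. r0 \<in> ?S \<and> (\<forall>u\<in>L. r0 u \<le> r u) \<and> (\<forall>s\<in>?S. (\<Sum>u\<in>L. f (s u)) \<le> (\<Sum>u\<in>L. f (r0 u)))"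
        using opt_f[OF finU groups_sub groups_cover groups_disj f_mono _ LU] by blast
      then obtain \<phi> where \<phi>: "\<forall>r\<in>?S. \<phi> r \<in> ?S \<and> (\<forall>u\<in>L. \<phi> r u \<le> r u) \<and> (\<forall>s\<in>?S. (\<Sum>u\<in>L. f (s u)) \<le> (\<Sum>u\<in>L. f (\<phi> r u)))"
        by metis
      define D where "D = map_pmf \<phi> F"
      have suppD: "set_pmf D \<subseteq> ?S" unfolding D_def using suppF \<phi> by auto
      have ED: "expval f g D u = (\<Sum>r\<in>?S. Val f g (\<phi> r) u * pmf F r)" for u
      proof -
        have "expval f g D u = measure_pmf.expectation F (\<lambda>r. Val f g (\<phi> r) u)"
          unfolding expval_def D_def by simp
        also have "\<dots> = (\<Sum>r\<in>?S. Val f g (\<phi> r) u * pmf F r)"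
          using suppF by (intro integral_measure_pmf_real[OF finS]) auto
        finally show ?thesis .
      qed
      have DgeF: "?E u \<le> expval f g D u" if u: "u \<in> L" for u
      proof -
        have "?E u = (\<Sum>r\<in>?S. Val f g r u * pmf F r)" using expS[OF suppF] .
        also have "\<dots> \<le> (\<Sum>r\<in>?S. Val f g (\<phi> r) u * pmf F r)"
        proof (rule sum_mono)
          fix r assume r: "r \<in> ?S"
          have rR: "r \<in> rankings U" using r unfolding feasible_def by auto
          have pR: "\<phi> r \<in> rankings U" using \<phi> r unfolding feasible_def by auto
          have "\<phi> r u \<le> r u" using \<phi> r u by blast
          moreover have "1 \<le> \<phi> r u" using rank_range[OF pR] u LU by auto
          moreover have "r u \<le> card U" using rank_range[OF rR] u LU by auto
          ultimately have "f (r u) \<le> f (\<phi> r u)" using f_mono by blast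
          thus "Val f g r u * pmf F r \<le> Val f g (\<phi> r) u * pmf F r"
            unfolding Val_def by (intro mult_right_mono) auto
        qed
        finally show ?thesis using ED by simp
      qed
      obtain sH where sH: "sH \<in> ?S" "Hval ?S f g L = (\<Sum>u\<in>L. Val f g sH u)" using Hin by blast
      have eqL: "real (card L) * ?m = (\<Sum>u\<in>L. ?E u)" unfolding L_def by simp
      have "real (card L) * ?m < Hval ?S f g L" using Hgt .
      also have "Hval ?S f g L = (\<Sum>r\<in>?S. pmf F r * Hval ?S f g L)"
        using pmf1 by (simp add: sum_distrib_right[symmetric])
      also have "\<dots> \<le> (\<Sum>r\<in>?S. pmf F r * (\<Sum>u\<in>L. Val f g (\<phi> r) u))"
      proof (intro sum_mono mult_left_mono)
        fix r assume r: "r \<in> ?S"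
        have "(\<Sum>u\<in>L. f (sH u)) \<le> (\<Sum>u\<in>L. f (\<phi> r u))" using \<phi> r sH(1) by blast
        thus "Hval ?S f g L \<le> (\<Sum>u\<in>L. Val f g (\<phi> r) u)"
          unfolding sH(2) Val_def by (simp add: sum_subtractf)
      qed auto
      also have "\<dots> = (\<Sum>u\<in>L. expval f g D u)"
        unfolding ED by (subst sum.swap) (simp add: sum_distrib_left mult.commute)
      finally have lt: "(\<Sum>u\<in>L. ?E u) < (\<Sum>u\<in>L. expval f g D u)" using eqL by simp
      obtain u where uL: "u \<in> L" and ult: "?E u < expval f g D u"
      proof (rule ccontr)
        assume "\<not> thesis"
        hence "\<forall>u\<in>L. expval f g D u \<le> ?E u" using that not_less by blast
        hence "(\<Sum>u\<in>L. expval f g D u) \<le> (\<Sum>u\<in>L. ?E u)" by (intro sum_mono) auto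
        thus False using lt by linarith
      qed
      have uU: "u \<in> U" using uL LU by blast
      then obtain v where vU: "v \<in> U" and v1: "expval f g D v < ?E v" and v2: "?E v \<le> ?E u"
        using fair suppD ult unfolding maxmin_fair_def by blast
      have "?E u = ?m" using uL unfolding L_def by simp
      hence "?E v = ?m" using mle[OF vU] v2 by simp
      hence "v \<in> L" unfolding L_def using vU by simp
      thus False using DgeF v1 by fastforce
    qed
    have "Min ?R \<le> Hval ?S f g L / real (card L)"
      using finR LU Lne by (intro Min_le) auto
    also have "\<dots> \<le> ?m"
    proof -
      have "real (card L) > 0" using Lne finL by (simp add: card_gt_0_iff)
      thus ?thesis using HL by (simp add: pos_divide_le_eq mult.commute)
    qed
    finally show ?thesis using part1 by simp
  qed
qed

end
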